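(* For every $n\ge 1$ with $n\neq 3$, the fan $F_n$ is distance antimagic; the fan $F_3$ is not distance antimagic.
   Context: The fan $F_n$ is obtained from a path $x_1x_2\cdots x_n$ by adding a center vertex $x_0$ adjacent to all of $x_1,\dots,x_n$; it has $n+1$ vertices. For a graph $G=(V,E)$ with $v=|V|$ and a bijection $f:V\to\{1,\dots,v\}$, the vertex-weight of $x$ is $w(x)=\sum_{y\in N(x)}f(y)$ with $N(x)$ the set of neighbours of $x$. $G$ is distance antimagic if it admits a bijection $f$ under which all vertex-weights are pairwise distinct. *)

theory Defs
  imports Main
begin

(* A simple graph given by a finite vertex set V and a symmetric irreflexive
   adjacency relation adj. *)

definition nbhd :: "'a set \<Rightarrow> ('a \<Rightarrow> 'a \<Rightarrow> bool) \<Rightarrow> 'a \<Rightarrow> 'a set" where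
  "nbhd V adj x = {y \<in> V. adj x y}"

definition vertex_weight :: "'a set \<Rightarrow> ('a \<Rightarrow> 'a \<Rightarrow> bool) \<Rightarrow> ('a \<Rightarrow> nat) \<Rightarrow> 'a \<Rightarrow> nat" where
  "vertex_weight V adj f x = (\<Sum>y\<in>nbhd V adj x. f y)"

definition distance_antimagic :: "'a set \<Rightarrow> ('a \<Rightarrow> 'a \<Rightarrow> bool) \<Rightarrow> bool" where
  "distance_antimagic V adj \<longleftrightarrow>
     (\<exists>f. bij_betw f V {1..card V} \<and> inj_on (vertex_weight V adj f) V)"

definition fan_vertices :: "nat \<Rightarrow> nat set" where
  "fan_vertices n = {0..n}"

definition fan_adj :: "nat \<Rightarrow> nat \<Rightarrow> nat \<Rightarrow> bool" where
  "fan_adj n x y \<longleftrightarrow> x \<le> n \<and> y \<le> n \<and>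
     ((x = 0 \<and> 1 \<le> y) \<or> (y = 0 \<and> 1 \<le> x) \<or>
      (1 \<le> x \<and> 1 \<le> y \<and> (y = x + 1 \<or> x = y + 1)))"

end

theory Submission
  imports Defs
begin

lemma nb0: "nbhd (fan_vertices n) (fan_adj n) 0 = {1..n}"
  by (auto simp: nbhd_def fan_vertices_def fan_adj_def)

lemma wt0: "vertex_weight (fan_vertices n) (fan_adj n) f 0 = (\<Sum>y\<in>{1..n}. f y)"
  by (simp add: vertex_weight_def nb0)

lemma wti:
  assumes "1 \<le> i" "i \<le> n"
  shows "vertex_weight (fan_vertices n) (fan_adj n) f i
    = f 0 + (if 2 \<le> i then f (i-1) else 0) + (if i < n then f (i+1) else 0)"
proof (cases "2 \<le> i")
  case True
  show ?thesis
  proof (cases "i < n")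
    case True
    have "nbhd (fan_vertices n) (fan_adj n) i = {0, i-1, i+1}"
      using assms \<open>2 \<le> i\<close> True by (auto simp: nbhd_def fan_vertices_def fan_adj_def)
    then show ?thesis using assms \<open>2 \<le> i\<close> True by (simp add: vertex_weight_def)
  next
    case False
    have "nbhd (fan_vertices n) (fan_adj n) i = {0, i-1}"
      using assms \<open>2 \<le> i\<close> False by (auto simp: nbhd_def fan_vertices_def fan_adj_def)
    then show ?thesis using assms \<open>2 \<le> i\<close> False by (simp add: vertex_weight_def)
  qed
next
  case F: False
  show ?thesis
  proof (cases "i < n")
    case True
    have "nbhd (fan_vertices n) (fan_adj n) i = {0, i+1}"
      using assms F True by (auto simp: nbhd_def fan_vertices_def fan_adj_def)
    then show ?thesis using assms F True by (simp add: vertex_weight_def)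
  next
    case False
    have "nbhd (fan_vertices n) (fan_adj n) i = {0}"
      using assms F False by (auto simp: nbhd_def fan_vertices_def fan_adj_def)
    then show ?thesis using assms F False by (simp add: vertex_weight_def)
  qed
qed

lemma gauss: "2 * (\<Sum>y\<in>{1..n::nat}. y) = n * (n + 1)"
  by (induction n) auto

lemma gauss1: "2 * (\<Sum>y\<in>{1..n::nat}. y + 1) = n * (n + 3)"
  by (induction n) (auto simp: algebra_simps)

lemma odd_case:
  assumes "odd n" "n \<noteq> 3"
  shows "distance_antimagic (fan_vertices n) (fan_adj n)"
proof -
  let ?w = "vertex_weight (fan_vertices n) (fan_adj n) (\<lambda>v. v + 1)"
  have card: "card (fan_vertices n) = n + 1" by (simp add: fan_vertices_def)
  have bij: "bij_betw (\<lambda>v. v + 1) (fan_vertices n) {1..card (fan_vertices n)}"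
    unfolding card fan_vertices_def bij_betw_def inj_on_def
    by (auto simp: image_iff intro!: bexI[where x="_ - 1"])
  have n1: "n \<ge> 1" using assms by (cases n) auto
  have w0: "2 * ?w 0 = n * (n + 3)" using gauss1[of n] by (simp add: wt0)
  have wi: "?w i = 1 + (if 2 \<le> i then i else 0) + (if i < n then i + 2 else 0)"
    if "1 \<le> i" "i \<le> n" for i using wti[OF that] that by simp
  have inj: "inj_on ?w (fan_vertices n)"
  proof (rule inj_onI)
    fix x y assume x: "x \<in> fan_vertices n" and y: "y \<in> fan_vertices n" and e: "?w x = ?w y"
    have big: "?w i < ?w 0" if "1 \<le> i" "i \<le> n" for i
    proof (cases "n = 1")
      case True then show ?thesis using that w0 wi[OF that] by simp
    next
      case False
      then have "n \<ge> 3" using assms(1) n1 by presburger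
      then have "n * (n + 3) \<ge> n * 6" using mult_le_mono2 by simp
      then have "2 * ?w 0 \<ge> 6 * n" using w0 by linarith
      then show ?thesis using that wi[OF that] by (simp split: if_splits)
    qed
    show "x = y"
    proof (cases "x = 0 \<or> y = 0")
      case True
      then show ?thesis
      proof
        assume "x = 0"
        show ?thesis
        proof (rule ccontr)
          assume "x \<noteq> y"
          then have "1 \<le> y" "y \<le> n" using y \<open>x = 0\<close> by (auto simp: fan_vertices_def)
          then show False using big[of y] e \<open>x = 0\<close> by simp
        qed
      next
        assume "y = 0"
        show ?thesis
        proof (rule ccontr)
          assume "x \<noteq> y"
          then have "1 \<le> x" "x \<le> n" using x \<open>y = 0\<close> by (auto simp: fan_vertices_def)
          then show False using big[of x] e \<open>y = 0\<close> by simp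
        qed
      qed
    next
      case False
      then have "1 \<le> x" "x \<le> n" "1 \<le> y" "y \<le> n" using x y by (auto simp: fan_vertices_def)
      then have "(if 2 \<le> x then x else 0) + (if x < n then x + 2 else 0) = (if 2 \<le> y then y else 0) + (if y < n then y + 2 else 0)"
        using e wi[of x] wi[of y] by simp
      then show ?thesis using \<open>1 \<le> x\<close> \<open>x \<le> n\<close> \<open>1 \<le> y\<close> \<open>y \<le> n\<close> assms
        by (auto split: if_split_asm; presburger)
    qed
  qed
  show ?thesis unfolding distance_antimagic_def using bij inj by blast
qed

lemma even_case:
  assumes "even n" "n \<ge> 2"
  shows "distance_antimagic (fan_vertices n) (fan_adj n)"
proof -
  define f where "f = (\<lambda>v::nat. if v = 0 then n + 1 else v)"
  let ?w = "vertex_weight (fan_vertices n) (fan_adj n) f"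
  have card: "card (fan_vertices n) = n + 1" by (simp add: fan_vertices_def)
  have bij: "bij_betw f (fan_vertices n) {1..card (fan_vertices n)}"
    unfolding card fan_vertices_def bij_betw_def inj_on_def f_def
    by (auto simp: image_iff split: if_splits)
  have w0: "2 * ?w 0 = n * (n + 1)" using gauss[of n] by (simp add: wt0 f_def)
  have wi: "?w i = n + 1 + (if 2 \<le> i then i - 1 else 0) + (if i < n then i + 1 else 0)"
    if "1 \<le> i" "i \<le> n" for i using wti[OF that] that by (simp add: f_def)
  have inj: "inj_on ?w (fan_vertices n)"
  proof (rule inj_onI)
    fix x y assume x: "x \<in> fan_vertices n" and y: "y \<in> fan_vertices n" and e: "?w x = ?w y"
    have ne: "?w i \<noteq> ?w 0" if "1 \<le> i" "i \<le> n" for i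
    proof (cases "n = 2 \<or> n = 4")
      case True then show ?thesis using that w0 wi[OF that] by (auto split: if_splits; presburger)
    next
      case False
      then have "n \<ge> 6" using assms by presburger
      then have "n * (n + 1) \<ge> 6 * (n+1)" using mult_le_mono1 by blast
      then have "6 * n + 6 \<le> n * (n + 1)" by simp
      then have "2 * ?w 0 \<ge> 6 * n + 6" using w0 by linarith
      then show ?thesis using that wi[OF that] by (simp split: if_splits)
    qed
    show "x = y"
    proof (cases "x = 0 \<or> y = 0")
      case True
      then show ?thesis
      proof
        assume "x = 0"
        show ?thesis
        proof (rule ccontr)
          assume "x \<noteq> y"
          then have "1 \<le> y" "y \<le> n" using y \<open>x = 0\<close> by (auto simp: fan_vertices_def)
          then show False using ne[of y] e \<open>x = 0\<close> by simp
        qed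
      next
        assume "y = 0"
        show ?thesis
        proof (rule ccontr)
          assume "x \<noteq> y"
          then have "1 \<le> x" "x \<le> n" using x \<open>y = 0\<close> by (auto simp: fan_vertices_def)
          then show False using ne[of x] e \<open>y = 0\<close> by simp
        qed
      qed
    next
      case False
      then have "1 \<le> x" "x \<le> n" "1 \<le> y" "y \<le> n" using x y by (auto simp: fan_vertices_def)
      then have "(if 2 \<le> x then x - 1 else 0) + (if x < n then x + 1 else 0) = (if 2 \<le> y then y - 1 else 0) + (if y < n then y + 1 else 0)"
        using e wi[of x] wi[of y] by simp
      then show ?thesis using \<open>1 \<le> x\<close> \<open>x \<le> n\<close> \<open>1 \<le> y\<close> \<open>y \<le> n\<close> assms
        by (auto split: if_split_asm; presburger)
    qed
  qed
  show ?thesis unfolding distance_antimagic_def using bij inj by blast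
qed

lemma not3: "\<not> distance_antimagic (fan_vertices 3) (fan_adj 3)"
proof
  assume "distance_antimagic (fan_vertices 3) (fan_adj 3)"
  then obtain f where "inj_on (vertex_weight (fan_vertices 3) (fan_adj 3) f) (fan_vertices 3)"
    unfolding distance_antimagic_def by blast
  moreover have "vertex_weight (fan_vertices 3) (fan_adj 3) f 1 = vertex_weight (fan_vertices 3) (fan_adj 3) f 3"
    using wti[of 1 3 f] wti[of 3 3 f] by (simp add: numeral_2_eq_2)
  ultimately have "(1::nat) = 3" by (rule inj_onD) (auto simp: fan_vertices_def)
  then show False by simp
qed

theorem mainTheorem14:
  shows "(\<forall>n::nat. n \<ge> 1 \<and> n \<noteq> 3 \<longrightarrow> distance_antimagic (fan_vertices n) (fan_adj n))
         \<and> \<not> distance_antimagic (fan_vertices 3) (fan_adj 3)"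
proof (intro conjI allI impI)
  fix n :: nat assume "n \<ge> 1 \<and> n \<noteq> 3"
  then show "distance_antimagic (fan_vertices n) (fan_adj n)"
  proof (cases "odd n")
    case True then show ?thesis using odd_case \<open>n \<ge> 1 \<and> n \<noteq> 3\<close> by blast
  next
    case False
    then have "n \<ge> 2" using \<open>n \<ge> 1 \<and> n \<noteq> 3\<close> by presburger
    then show ?thesis using False even_case by blast
  qed
qed (rule not3)

end
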